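(* Let $T\subset\mathbb{R}^2$ be a closed triangle with vertices $A=(x_a,y_a)$, $B=(x_b,y_b)$, $O=(x_o,y_o)$ with $y_a=y_b>y_o$, and let $C$ be a point of the open segment $(A,B)$. Put $T'=T\setminus\{A,B\}$ and $T''=T\setminus(\{A\}\cup[B,C])$, where $[B,C]$ is the closed segment from $B$ to $C$. Then there exists a homeomorphism $f:T'\to T''$ preserving the second coordinate (i.e. $f(x,y)=(f_1(x,y),y)$). In particular $f$ is the identity on the sides $(A,O]$ and $[O,B)$, and $f$ maps the open segment $(A,B)$ onto the open segment $(A,C)$. *)

theory Defs
  imports "HOL-Analysis.Analysis"
begin

end

theory Submission
  imports Defs
begin


definition phi :: "real \<Rightarrow> real \<Rightarrow> real \<Rightarrow> real" where
 "phi s t u = (if u - s*t*(1-t) \<le> 0 then u/(1-t) else s*t + (u - s*t*(1-t))*(1-s)/(1-s*(1-t)))"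
definition psi :: "real \<Rightarrow> real \<Rightarrow> real \<Rightarrow> real" where
 "psi s t v = (if v - s*t \<le> 0 then v * (1 - t) else s*t*(1-t) + (v - s*t)*(1-s*(1-t))/(1-s))"

lemma D_pos: "0 < (s::real) \<Longrightarrow> s < 1 \<Longrightarrow> 0 \<le> t \<Longrightarrow> 0 < 1 - s*(1-t)"
proof -
  assume a: "0 < s" "s < 1" "0 \<le> t"
  have "0 \<le> s*t" using a by simp
  then have "s*(1-t) \<le> s" by (simp add: algebra_simps)
  then show ?thesis using a by linarith
qed

lemma phi_props:
  assumes s: "0 < s" "s < 1" and tu: "0 \<le> u" "u \<le> t" "t \<le> 1" and nB: "\<not>(t = 1 \<and> u = 0)"
  shows "0 \<le> phi s t u" "phi s t u \<le> t" "t = 1 \<Longrightarrow> s < phi s t u"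
        "t = 1 \<Longrightarrow> phi s t u = 1 \<Longrightarrow> u = 1" "psi s t (phi s t u) = u"
proof -
  have t0: "0 \<le> t" using tu by linarith
  have D: "0 < 1 - s*(1-t)" using D_pos s t0 by blast
  have "0 \<le> phi s t u \<and> phi s t u \<le> t \<and> (t = 1 \<longrightarrow> s < phi s t u) \<and>
        (t = 1 \<longrightarrow> phi s t u = 1 \<longrightarrow> u = 1) \<and> psi s t (phi s t u) = u"
  proof (cases "u - s*t*(1-t) \<le> 0")
    case True
    have t1: "t < 1"
    proof (rule ccontr)
      assume "\<not> t < 1" then have "t = 1" using tu by auto
      then show False using True nB tu by auto
    qed
    have ph: "phi s t u = u/(1-t)" using True by (simp add: phi_def)
    have "s*t \<le> t" using s t0 by (simp add: mult_left_le_one_le)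
    then have "s*t*(1-t) \<le> t*(1-t)" using t1 by (simp add: mult_right_mono)
    have le: "u/(1-t) \<le> s*t" using True t1 by (simp add: divide_le_eq)
    have "s*t \<le> t" using s t0 by (simp add: mult_left_le_one_le)
    moreover have "psi s t (u/(1-t)) = u" using le t1 by (simp add: psi_def)
    ultimately show ?thesis using ph le t1 tu by auto
  next
    case False
    define D where "D = 1 - s*(1-t)"
    have Dp: "0 < D" using D D_def by simp
    have ph: "phi s t u = s*t + (u - s*t*(1-t))*(1-s)/D" using False by (simp add: phi_def D_def)
    have q: "0 < (u - s*t*(1-t))*(1-s)/D" using False s Dp by simp
    have "(u - s*t*(1-t))*(1-s) \<le> (t - s*t*(1-t))*(1-s)" using tu s by (simp add: mult_right_mono)
    also have "... = t*(1-s)*D" by (simp add: D_def algebra_simps)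
    finally have "(u - s*t*(1-t))*(1-s)/D \<le> t*(1-s)" using Dp by (simp add: divide_le_eq)
    then have le: "phi s t u \<le> t" using ph by (simp add: algebra_simps)
    have ge: "0 \<le> phi s t u" using ph q s t0 by (simp add: add_nonneg_pos less_imp_le)
    have ps: "psi s t (phi s t u) = u"
    proof -
      have "phi s t u - s*t > 0" using ph q by simp
      then have "psi s t (phi s t u) = s*t*(1-t) + ((u - s*t*(1-t))*(1-s)/D)*D/(1-s)"
        using ph by (simp add: psi_def D_def)
      also have "... = u" using Dp s by simp
      finally show ?thesis .
    qed
    have t1: "t = 1 \<Longrightarrow> s < phi s t u \<and> (phi s t u = 1 \<longrightarrow> u = 1)"
    proof -
      assume "t = 1"
      then have e: "phi s t u = s + u*(1-s)" using ph by (simp add: D_def)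
      have "phi s t u = 1 \<Longrightarrow> u = 1"
      proof -
        assume "phi s t u = 1"
        then have "(1-u)*(1-s) = 0" using e by (simp add: algebra_simps)
        then show "u = 1" using s by simp
      qed
      then show ?thesis using s q ph \<open>t=1\<close> by (auto simp: D_def)
    qed
    show ?thesis using le ge ps t1 by blast
  qed
  then show "0 \<le> phi s t u" "phi s t u \<le> t" "t = 1 \<Longrightarrow> s < phi s t u"
        "t = 1 \<Longrightarrow> phi s t u = 1 \<Longrightarrow> u = 1" "psi s t (phi s t u) = u" by blast+
qed

lemma psi_props:
  assumes s: "0 < s" "s < 1" and tu: "0 \<le> v" "v \<le> t" "t \<le> 1" and nB: "\<not>(t = 1 \<and> v \<le> s)"
    and nA: "\<not>(t = 1 \<and> v = 1)"
  shows "0 \<le> psi s t v" "psi s t v \<le> t" "t = 1 \<Longrightarrow> psi s t v \<noteq> 0"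
        "t = 1 \<Longrightarrow> psi s t v \<noteq> 1" "phi s t (psi s t v) = v"
proof -
  have t0: "0 \<le> t" using tu by linarith
  have D: "0 < 1 - s*(1-t)" using D_pos s t0 by blast
  have "0 \<le> psi s t v \<and> psi s t v \<le> t \<and> (t = 1 \<longrightarrow> psi s t v \<noteq> 0) \<and>
        (t = 1 \<longrightarrow> psi s t v \<noteq> 1) \<and> phi s t (psi s t v) = v"
  proof (cases "v - s*t \<le> 0")
    case True
    have t1: "t < 1" using True nB tu by (cases "t = 1") auto
    have ps: "psi s t v = v * (1-t)" using True by (simp add: psi_def)
    have "v * (1-t) \<le> s*t*(1-t)" using True t1 by (simp add: mult_right_mono)
    then have "phi s t (v * (1-t)) = v" using t1 by (simp add: phi_def)
    moreover have "v * (1-t) \<le> t"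
    proof -
      have "0 \<le> t * v" using tu t0 by simp
      moreover have "v * (1-t) = v - t * v" by (simp add: algebra_simps)
      ultimately show ?thesis using tu by linarith
    qed
    ultimately show ?thesis using ps t1 tu t0 by auto
  next
    case False
    define D where "D = 1 - s*(1-t)"
    have Dp: "0 < D" using D D_def by simp
    have ps: "psi s t v = s*t*(1-t) + (v - s*t)*D/(1-s)" using False by (simp add: psi_def D_def)
    have q: "0 < (v - s*t)*D/(1-s)" using False s Dp by simp
    have st: "0 \<le> s*t*(1-t)" using s t0 tu by simp
    have "(v - s*t)*D \<le> t*(1-s)*D" using tu Dp by (simp add: mult_right_mono algebra_simps)
    then have "(v - s*t)*D/(1-s) \<le> t*D" using s by (simp add: divide_le_eq algebra_simps)
    then have le: "psi s t v \<le> t" using ps by (simp add: D_def algebra_simps)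
    have ph: "phi s t (psi s t v) = v"
    proof -
      have "psi s t v - s*t*(1-t) > 0" using ps q by simp
      then have "phi s t (psi s t v) = s*t + ((v - s*t)*D/(1-s))*(1-s)/D"
        using ps by (simp add: phi_def D_def)
      also have "... = v" using Dp s by simp
      finally show ?thesis .
    qed
    have t1: "t = 1 \<Longrightarrow> psi s t v \<noteq> 0 \<and> psi s t v \<noteq> 1"
    proof -
      assume t: "t = 1"
      then have e: "psi s t v = (v - s)/(1-s)" using ps by (simp add: D_def)
      have "v < 1" using nA tu t by auto
      then show ?thesis using e s False t by (auto simp: divide_eq_eq)
    qed
    show ?thesis using le ps q st ph t1 by auto
  qed
  then show "0 \<le> psi s t v" "psi s t v \<le> t" "t = 1 \<Longrightarrow> psi s t v \<noteq> 0"
        "t = 1 \<Longrightarrow> psi s t v \<noteq> 1" "phi s t (psi s t v) = v" by blast+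
qed



lemma phi_0: "0 \<le> (s::real) \<Longrightarrow> 0 \<le> t \<Longrightarrow> t \<le> 1 \<Longrightarrow> phi s t 0 = 0"
  by (simp add: phi_def)

lemma phi_diag: assumes "0 < s" "s < 1" "0 \<le> t" "t < 1" shows "phi s t t = t"
proof (cases "t = 0")
  case True then show ?thesis by (simp add: phi_def)
next
  case False
  define D where "D = 1 - s*(1-t)"
  have Dp: "0 < D" using D_pos assms D_def by simp
  have "s*(1-t) < 1" using Dp D_def by simp
  then have "s*(1-t)*t < 1*t" using False assms by (intro mult_strict_right_mono) auto
  then have "s*t*(1-t) < t" by (simp add: algebra_simps)
  then have "phi s t t = s*t + (t - s*t*(1-t))*(1-s)/D" by (simp add: phi_def D_def)
  also have "t - s*t*(1-t) = t*D" by (simp add: D_def algebra_simps)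
  also have "(t*D)*(1-s)/D = t*(1-s)" using Dp by simp
  also have "s*t + t*(1-s) = t" by (simp add: algebra_simps)
  finally show ?thesis .
qed

lemma phi_1: assumes "0 < u" shows "phi s 1 u = s + u*(1-s)"
  using assms by (simp add: phi_def)



theorem mainTheorem4:
  fixes A B Ov C :: "real \<times> real"
  assumes "snd A = snd B" and "snd B > snd Ov"
    and "C \<in> open_segment A B"
  shows "\<exists>f g. homeomorphism (convex hull {A, B, Ov} - {A, B})
                   (convex hull {A, B, Ov} - ({A} \<union> closed_segment B C)) f g
             \<and> (\<forall>p \<in> convex hull {A, B, Ov} - {A, B}. snd (f p) = snd p)
             \<and> (\<forall>p \<in> closed_segment A Ov - {A}. f p = p)
             \<and> (\<forall>p \<in> closed_segment Ov B - {B}. f p = p)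
             \<and> f ` open_segment A B = open_segment A C"
proof -
  obtain m where AB: "A \<noteq> B" and m: "0 < m" "m < 1" and Ceq: "C = (1 - m) *\<^sub>R A + m *\<^sub>R B"
    using assms(3) in_segment(2) by blast
  define s where "s = 1 - m"
  have s: "0 < s" "s < 1" using m s_def by auto
  define xo where "xo = fst Ov"
  define yo where "yo = snd Ov"
  define xb where "xb = fst B"
  define e where "e = fst A - fst B"
  define d where "d = snd B - snd Ov"
  have d: "d \<noteq> 0" using assms(2) d_def by simp
  have e: "e \<noteq> 0" using AB assms(1) e_def by (simp add: prod_eq_iff)
  define P where "P = (\<lambda>t u. (xo + t*(xb-xo) + u*e, yo + t*d))"
  define tt where "tt = (\<lambda>p::real\<times>real. (snd p - yo)/d)"
  define uu where "uu = (\<lambda>p::real\<times>real. (fst p - xo - tt p*(xb-xo))/e)"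
  have Pinv: "tt (P t u) = t" "uu (P t u) = u" for t u
    using d e by (simp_all add: P_def tt_def uu_def)
  have Psurj: "P (tt p) (uu p) = p" for p
    using d e by (simp add: P_def tt_def uu_def prod_eq_iff)
  have Peq: "p = P t u \<longleftrightarrow> tt p = t \<and> uu p = u" for p t u
    using Pinv Psurj by metis
  have PA: "A = P 1 1" using assms(1) by (simp add: P_def xo_def yo_def xb_def e_def d_def prod_eq_iff)
  have PB: "B = P 1 0" by (simp add: P_def xo_def yo_def xb_def e_def d_def prod_eq_iff)
  have PO: "Ov = P 0 0" by (simp add: P_def xo_def yo_def xb_def e_def d_def prod_eq_iff)
  have Pcomb: "(1-a) *\<^sub>R P t u + a *\<^sub>R P t' u' = P ((1-a)*t + a*t') ((1-a)*u + a*u')" for a t u t' u'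
    by (simp add: P_def prod_eq_iff algebra_simps)
  have PC: "C = P 1 s" using Ceq PA PB Pcomb s_def by simp
  have seg: "p \<in> closed_segment (P t u) (P t' u') \<longleftrightarrow>
     (\<exists>a. 0 \<le> a \<and> a \<le> 1 \<and> tt p = (1-a)*t + a*t' \<and> uu p = (1-a)*u + a*u')" for p t u t' u'
    unfolding in_segment(1) Pcomb Peq by blast
  have oseg: "p \<in> open_segment (P t u) (P t' u') \<longleftrightarrow> (t \<noteq> t' \<or> u \<noteq> u') \<and>
     (\<exists>a. 0 < a \<and> a < 1 \<and> tt p = (1-a)*t + a*t' \<and> uu p = (1-a)*u + a*u')" for p t u t' u'
    unfolding in_segment(2) Pcomb Peq by (metis Pinv)
  have memT: "p \<in> convex hull {A,B,Ov} \<longleftrightarrow> 0 \<le> uu p \<and> uu p \<le> tt p \<and> tt p \<le> 1" for p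
  proof
    assume "p \<in> convex hull {A,B,Ov}"
    then obtain a b c where abc: "0 \<le> a" "0 \<le> b" "0 \<le> c" "a+b+c = 1" "p = a *\<^sub>R A + b *\<^sub>R B + c *\<^sub>R Ov"
      unfolding convex_hull_3 by blast
    have c: "c = 1 - a - b" using abc(4) by simp
    have "p = P (a+b) a" unfolding abc(5) c PA PB PO by (simp add: P_def prod_eq_iff algebra_simps)
    then show "0 \<le> uu p \<and> uu p \<le> tt p \<and> tt p \<le> 1" using abc Pinv by simp
  next
    assume h: "0 \<le> uu p \<and> uu p \<le> tt p \<and> tt p \<le> 1"
    have "p = uu p *\<^sub>R A + (tt p - uu p) *\<^sub>R B + (1 - tt p) *\<^sub>R Ov"
      unfolding PA PB PO by (subst (1) Psurj[symmetric]) (simp add: P_def prod_eq_iff algebra_simps)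
    then show "p \<in> convex hull {A,B,Ov}" unfolding convex_hull_3 using h
      by (intro CollectI exI[of _ "uu p"] exI[of _ "tt p - uu p"] exI[of _ "1 - tt p"]) auto
  qed
  have eqA: "p = A \<longleftrightarrow> tt p = 1 \<and> uu p = 1" for p by (simp only: PA Peq)
  have eqB: "p = B \<longleftrightarrow> tt p = 1 \<and> uu p = 0" for p by (simp only: PB Peq)
  have segBC: "p \<in> closed_segment B C \<longleftrightarrow> tt p = 1 \<and> 0 \<le> uu p \<and> uu p \<le> s" for p
  proof
    assume "p \<in> closed_segment B C"
    then obtain a where a: "0 \<le> a" "a \<le> 1" "tt p = 1" "uu p = a * s"
      unfolding PB PC seg by auto
    have "a * s \<le> s" using a s by (simp add: mult_left_le_one_le)
    then show "tt p = 1 \<and> 0 \<le> uu p \<and> uu p \<le> s" using a s by simp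
  next
    assume h: "tt p = 1 \<and> 0 \<le> uu p \<and> uu p \<le> s"
    show "p \<in> closed_segment B C" unfolding PB PC seg
      using h s by (intro exI[of _ "uu p / s"]) (auto simp: divide_le_eq)
  qed
  have segAO: "p \<in> closed_segment A Ov \<Longrightarrow> uu p = tt p \<and> 0 \<le> tt p \<and> tt p \<le> 1" for p
    unfolding PA PO seg by auto
  have segOB: "p \<in> closed_segment Ov B \<Longrightarrow> uu p = 0 \<and> 0 \<le> tt p \<and> tt p \<le> 1" for p
    unfolding PB PO seg by auto
  have segAB: "p \<in> open_segment A B \<longleftrightarrow> tt p = 1 \<and> 0 < uu p \<and> uu p < 1" for p
  proof
    assume "p \<in> open_segment A B"
    then obtain a where a: "0 < a" "a < 1" "tt p = 1" "uu p = 1 - a"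
      unfolding PA PB oseg by auto
    then show "tt p = 1 \<and> 0 < uu p \<and> uu p < 1" by simp
  next
    assume h: "tt p = 1 \<and> 0 < uu p \<and> uu p < 1"
    show "p \<in> open_segment A B" unfolding PA PB oseg
      using h by (intro conjI exI[of _ "1 - uu p"]) auto
  qed
  have segAC: "p \<in> open_segment A C \<longleftrightarrow> tt p = 1 \<and> s < uu p \<and> uu p < 1" for p
  proof
    assume "p \<in> open_segment A C"
    then obtain a where a: "0 < a" "a < 1" "tt p = 1" "uu p = (1 - a) + a * s"
      unfolding PA PC oseg by auto
    have "a * s < a" using a s by auto
    moreover have "s * (1 - a) < 1 * (1 - a)" using a s by (intro mult_strict_right_mono) auto
    then have "s - a * s < 1 - a" by (simp add: algebra_simps)
    ultimately show "tt p = 1 \<and> s < uu p \<and> uu p < 1" using a by linarith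
  next
    assume h: "tt p = 1 \<and> s < uu p \<and> uu p < 1"
    define a where "a = (1 - uu p)/(1 - s)"
    have a1: "a * (1 - s) = 1 - uu p" using s by (simp add: a_def)
    have a2: "(1 - a) + a * s = 1 - a * (1 - s)" by (simp add: algebra_simps)
    have e1: "uu p = (1 - (1 - uu p)/(1 - s)) + ((1 - uu p)/(1 - s)) * s"
      using a1 a2 unfolding a_def by linarith
    show "p \<in> open_segment A C" unfolding PA PC oseg
      using h s e1 by (intro conjI exI[of _ "(1 - uu p)/(1 - s)"]) (auto simp: divide_less_eq)
  qed
  define S1 where "S1 = convex hull {A, B, Ov} - {A, B}"
  define S2 where "S2 = convex hull {A, B, Ov} - ({A} \<union> closed_segment B C)"
  have memS1: "p \<in> S1 \<longleftrightarrow> 0 \<le> uu p \<and> uu p \<le> tt p \<and> tt p \<le> 1 \<and> \<not>(tt p = 1 \<and> uu p = 1)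
        \<and> \<not>(tt p = 1 \<and> uu p = 0)" for p
    unfolding S1_def using memT eqA eqB by blast
  have memS2: "p \<in> S2 \<longleftrightarrow> 0 \<le> uu p \<and> uu p \<le> tt p \<and> tt p \<le> 1 \<and> \<not>(tt p = 1 \<and> uu p = 1)
        \<and> \<not>(tt p = 1 \<and> uu p \<le> s)" for p
    unfolding S2_def using memT eqA segBC by auto
  define f where "f = (\<lambda>p. P (tt p) (phi s (tt p) (uu p)))"
  define g where "g = (\<lambda>p. P (tt p) (psi s (tt p) (uu p)))"
  have ftu: "tt (f p) = tt p" "uu (f p) = phi s (tt p) (uu p)" for p by (simp_all add: f_def Pinv)
  have gtu: "tt (g p) = tt p" "uu (g p) = psi s (tt p) (uu p)" for p by (simp_all add: g_def Pinv)
  have ct: "continuous_on X tt" for X unfolding tt_def by (intro continuous_intros) (use d in auto)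
  have cu: "continuous_on X uu" for X unfolding uu_def by (intro continuous_intros ct) (use e in auto)
  have cphi: "continuous_on S1 (\<lambda>p. phi s (tt p) (uu p))"
  proof -
    have "continuous_on S1 (\<lambda>p. if uu p - s*tt p*(1-tt p) \<le> 0 then uu p/(1 - tt p)
           else s*tt p + (uu p - s*tt p*(1-tt p))*(1-s)/(1-s*(1-tt p)))"
    proof (rule continuous_on_cases_le)
      have nz: "1 - tt x \<noteq> 0" if "x \<in> {x \<in> S1. uu x - s * tt x * (1 - tt x) \<le> 0}" for x
        using that memS1[of x] by auto
      show "continuous_on {x \<in> S1. uu x - s * tt x * (1 - tt x) \<le> 0} (\<lambda>p. uu p / (1 - tt p))"
        by (intro continuous_intros ct cu) (use nz in auto)
    next
      have nz: "1 - s * (1 - tt x) \<noteq> 0" if "x \<in> {x \<in> S1. 0 \<le> uu x - s * tt x * (1 - tt x)}" for x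
        using that memS1[of x] D_pos[OF s, of "tt x"] by auto
      show "continuous_on {x \<in> S1. 0 \<le> uu x - s * tt x * (1 - tt x)}
         (\<lambda>p. s * tt p + (uu p - s * tt p * (1 - tt p)) * (1 - s) / (1 - s * (1 - tt p)))"
        by (intro continuous_intros ct cu) (use nz in auto)
    next
      show "continuous_on S1 (\<lambda>x. uu x - s * tt x * (1 - tt x))"
        by (intro continuous_intros ct cu)
    next
      fix x assume x: "x \<in> S1" "uu x - s * tt x * (1 - tt x) = 0"
      then have t1: "tt x \<noteq> 1" using memS1[of x] by auto
      then have "uu x / (1 - tt x) = s * tt x" using x(2) by (simp add: field_simps)
      then show "uu x / (1 - tt x) = s * tt x + (uu x - s * tt x * (1 - tt x)) * (1 - s) / (1 - s * (1 - tt x))"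
        using x(2) by simp
    qed
    then show ?thesis by (simp add: phi_def)
  qed
  have cpsi: "continuous_on S2 (\<lambda>p. psi s (tt p) (uu p))"
  proof -
    have "continuous_on S2 (\<lambda>p. if uu p - s*tt p \<le> 0 then uu p * (1 - tt p)
           else s*tt p*(1-tt p) + (uu p - s*tt p)*(1-s*(1-tt p))/(1-s))"
    proof (rule continuous_on_cases_le)
      show "continuous_on {x \<in> S2. uu x - s * tt x \<le> 0} (\<lambda>p. uu p * (1 - tt p))"
        by (intro continuous_intros ct cu)
    next
      show "continuous_on {x \<in> S2. 0 \<le> uu x - s * tt x}
         (\<lambda>p. s*tt p*(1-tt p) + (uu p - s*tt p)*(1-s*(1-tt p))/(1-s))"
        by (intro continuous_intros ct cu) (use s in auto)
    next
      show "continuous_on S2 (\<lambda>x. uu x - s * tt x)"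
        by (intro continuous_intros ct cu)
    next
      fix x assume x: "x \<in> S2" "uu x - s * tt x = 0"
      then show "uu x * (1 - tt x) = s*tt x*(1-tt x) + (uu x - s*tt x)*(1-s*(1-tt x))/(1-s)"
        by simp
    qed
    then show ?thesis by (simp add: psi_def)
  qed
  have homeo: "homeomorphism S1 S2 f g"
  proof (rule homeomorphismI)
    show "continuous_on S1 f" unfolding f_def P_def by (intro continuous_intros ct cphi)
    show "continuous_on S2 g" unfolding g_def P_def by (intro continuous_intros ct cpsi)
    show "f ` S1 \<subseteq> S2"
    proof
      fix q assume "q \<in> f ` S1"
      then obtain p where p: "p \<in> S1" "q = f p" by blast
      have h: "0 \<le> uu p" "uu p \<le> tt p" "tt p \<le> 1" "\<not>(tt p = 1 \<and> uu p = 0)" "\<not>(tt p = 1 \<and> uu p = 1)"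
        using p memS1 by auto
      note pp = phi_props[OF s h(1-4)]
      have "tt p = 1 \<Longrightarrow> phi s (tt p) (uu p) \<noteq> 1" using pp(4) h(5) by blast
      then show "q \<in> S2" unfolding memS2 p ftu using pp h by auto
    qed
    show "g ` S2 \<subseteq> S1"
    proof
      fix q assume "q \<in> g ` S2"
      then obtain p where p: "p \<in> S2" "q = g p" by blast
      have h: "0 \<le> uu p" "uu p \<le> tt p" "tt p \<le> 1" "\<not>(tt p = 1 \<and> uu p \<le> s)" "\<not>(tt p = 1 \<and> uu p = 1)"
        using p memS2 by auto
      note pp = psi_props[OF s h]
      show "q \<in> S1" unfolding memS1 p gtu using pp h by auto
    qed
    show "g (f x) = x" if "x \<in> S1" for x
    proof -
      have h: "0 \<le> uu x" "uu x \<le> tt x" "tt x \<le> 1" "\<not>(tt x = 1 \<and> uu x = 0)"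
        using that memS1 by auto
      have "g (f x) = P (tt x) (uu x)" unfolding g_def ftu phi_props(5)[OF s h] ..
      then show ?thesis using Psurj by simp
    qed
    show "f (g y) = y" if "y \<in> S2" for y
    proof -
      have h: "0 \<le> uu y" "uu y \<le> tt y" "tt y \<le> 1" "\<not>(tt y = 1 \<and> uu y \<le> s)" "\<not>(tt y = 1 \<and> uu y = 1)"
        using that memS2 by auto
      have "f (g y) = P (tt y) (uu y)" unfolding f_def gtu psi_props(5)[OF s h] ..
      then show ?thesis using Psurj by simp
    qed
  qed
  have sndP: "snd (P t x) = snd (P t y)" for t x y by (simp add: P_def)
  have snd_f: "snd (f p) = snd p" for p
    using sndP[of "tt p" "phi s (tt p) (uu p)" "uu p"] Psurj[of p] by (simp add: f_def)
  have fix1: "f p = p" if "p \<in> closed_segment A Ov - {A}" for p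
  proof -
    have h: "uu p = tt p" "0 \<le> tt p" "tt p \<le> 1" using segAO that by auto
    have "tt p \<noteq> 1" using that eqA h by auto
    then have "phi s (tt p) (uu p) = uu p" using phi_diag[OF s h(2)] h by simp
    then show ?thesis using Psurj by (simp add: f_def)
  qed
  have fix2: "f p = p" if "p \<in> closed_segment Ov B - {B}" for p
  proof -
    have h: "uu p = 0" "0 \<le> tt p" "tt p \<le> 1" using segOB that by auto
    then have "phi s (tt p) (uu p) = uu p" using phi_0[of s "tt p"] s by simp
    then show ?thesis using Psurj by (simp add: f_def)
  qed
  have img: "f ` open_segment A B = open_segment A C"
  proof
    show "f ` open_segment A B \<subseteq> open_segment A C"
    proof
      fix q assume "q \<in> f ` open_segment A B"
      then obtain p where p: "p \<in> open_segment A B" "q = f p" by blast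
      have h: "tt p = 1" "0 < uu p" "uu p < 1" using p segAB by auto
      have ph: "phi s (tt p) (uu p) = s + uu p * (1 - s)" using h phi_1 by simp
      have "0 < uu p * (1 - s)" "uu p * (1 - s) < 1 * (1 - s)" using h s
        by (simp, intro mult_strict_right_mono) auto
      then show "q \<in> open_segment A C" unfolding segAC p ftu ph using h by simp
    qed
    show "open_segment A C \<subseteq> f ` open_segment A B"
    proof
      fix q assume "q \<in> open_segment A C"
      then have h: "tt q = 1" "s < uu q" "uu q < 1" using segAC by auto
      define w where "w = (uu q - s)/(1 - s)"
      have w: "0 < w" "w < 1" using h s by (auto simp: w_def divide_less_eq)
      define p where "p = P 1 w"
      have pin: "p \<in> open_segment A B" unfolding segAB p_def Pinv using w by simp
      have "phi s 1 w = uu q" using phi_1[OF w(1)] s by (simp add: w_def)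
      then have "f p = P (tt q) (uu q)" unfolding f_def p_def Pinv h(1) by simp
      then have "f p = q" using Psurj by simp
      then show "q \<in> f ` open_segment A B" using pin by blast
    qed
  qed
  show ?thesis
    apply (rule exI[of _ f], rule exI[of _ g])
    using homeo snd_f fix1 fix2 img unfolding S1_def S2_def by blast
qed

end
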